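(* Let $G$ be a Carnot group with left-invariant (sub-)Riemannian metric $d$ defined by the left-invariant distribution $D$ with $D(e)=V$ and a left-invariant inner product $\langle\cdot,\cdot\rangle$ on $D$. If $G$ is non-commutative, write $\mathfrak{g}=\bigoplus_{k=1}^{l}\mathfrak{g}_k$ for the grading with $\mathfrak{g}_1=V$, $l\ge 2$, and take the left-invariant rigging $D^{\perp}$ with $D^{\perp}(e)=\bigoplus_{k=2}^{l}\mathfrak{g}_k$. Then $(G,d)$ has zero curvatures (Riemannian curvatures if $G$ is commutative, and Solov'ev sectional, Ricci and scalar curvatures of $(D,\langle\cdot,\cdot\rangle)$ with respect to $D^{\perp}$ otherwise).
   Context: A Carnot group is a Lie group $G$ with Lie algebra $\mathfrak{g}$ equipped with a one-parameter multiplicative group of automorphisms $\delta_s$, $s>0$, such that $V=\{v\in\mathfrak{g}: d\delta_s(v)=sv\}$ generates $\mathfrak{g}$ as a Lie algebra; then $\mathfrak{g}$ is graded nilpotent, $\mathfrak{g}=\bigoplus_{k=1}^l\mathfrak{g}_k$ with $\mathfrak{g}_1=V$ and $[\mathfrak{g}_i,\mathfrak{g}_j]\subset\mathfrak{g}_{i+j}$. Solov'ev curvatures: choose a left-invariant Riemannian metric $(\cdot,\cdot)$ with $(\cdot,\cdot)|_D=\langle\cdot,\cdot\rangle$ and $(D,D^\perp)=0$; let $\nabla$ be its Levi-Civita connection, $H,V$ the projections onto $D,D^\perp$, $\overline{\nabla}_XY=H\nabla_X(HY)+V\nabla_X(VY)$, $T$ its torsion and $\overline{R}$ its curvature. For $X,Y,Z,W$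 tangent to $D$, $(K(X,Y)Z,W)=(\overline{R}(X,Y)Z,W)-\tfrac12(T(X,Y),T(Z,W))$; sectional curvature $K_{uv}=(K(u,v)v,u)/(\|u\|^2\|v\|^2-(u,v)^2)$ for non-collinear $u,v\in D(p)$, Ricci and scalar curvatures are the corresponding sums over orthonormal bases of $D(p)$. *)

theory Defs
  imports "HOL-Analysis.Analysis"
begin

text \<open>Algebraic model of a Carnot group via its Lie algebra g = T_e G.
  The type 'a (a finite-dimensional real inner product space) is g, and its
  inner product is the left-invariant Riemannian metric at e. All objects are
  left-invariant, so connections, torsion and curvatures are computed on
  left-invariant vector fields, i.e. on elements of g.\<close>

definition lie_algebra :: "('a::real_vector \<Rightarrow> 'a \<Rightarrow> 'a) \<Rightarrow> bool" where
  "lie_algebra br \<longleftrightarrow>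
     (\<forall>y. linear (\<lambda>x. br x y)) \<and> (\<forall>x. linear (\<lambda>y. br x y)) \<and>
     (\<forall>x. br x x = 0) \<and>
     (\<forall>x y z. br x (br y z) + br y (br z x) + br z (br x y) = 0)"

definition lie_generates :: "('a::real_vector \<Rightarrow> 'a \<Rightarrow> 'a) \<Rightarrow> 'a set \<Rightarrow> bool" where
  "lie_generates br V \<longleftrightarrow>
     \<Inter>{S. subspace S \<and> V \<subseteq> S \<and> (\<forall>x\<in>S. \<forall>y\<in>S. br x y \<in> S)} = UNIV"

definition direct_sum_decomp :: "(nat \<Rightarrow> 'a::real_vector set) \<Rightarrow> nat \<Rightarrow> bool" where
  "direct_sum_decomp gr l \<longleftrightarrow>
     (\<forall>k\<in>{1..l}. subspace (gr k)) \<and>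
     (\<forall>x. \<exists>!c. (\<forall>k\<in>{1..l}. c k \<in> gr k) \<and> (\<forall>k. k \<notin> {1..l} \<longrightarrow> c k = 0) \<and>
             x = (\<Sum>k=1..l. c k))"

definition carnot_algebra :: "('a::real_vector \<Rightarrow> 'a \<Rightarrow> 'a) \<Rightarrow> (nat \<Rightarrow> 'a set) \<Rightarrow> nat \<Rightarrow> bool" where
  "carnot_algebra br gr l \<longleftrightarrow>
     lie_algebra br \<and> l \<ge> 1 \<and> direct_sum_decomp gr l \<and> gr l \<noteq> {0} \<and>
     (\<forall>i\<in>{1..l}. \<forall>j\<in>{1..l}. \<forall>x\<in>gr i. \<forall>y\<in>gr j.
        br x y \<in> (if i + j \<le> l then gr (i + j) else {0})) \<and>
     lie_generates br (gr 1)"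

definition commutative_alg :: "('a::real_vector \<Rightarrow> 'a \<Rightarrow> 'a) \<Rightarrow> bool" where
  "commutative_alg br \<longleftrightarrow> (\<forall>x y. br x y = 0)"

text \<open>Levi-Civita connection on left-invariant fields (Koszul formula),
  expressed in an orthonormal basis.\<close>
definition lc_nabla :: "('a::euclidean_space \<Rightarrow> 'a \<Rightarrow> 'a) \<Rightarrow> 'a \<Rightarrow> 'a \<Rightarrow> 'a" where
  "lc_nabla br X Y = (\<Sum>b\<in>Basis.
      ((br X Y \<bullet> b - br Y b \<bullet> X + br b X \<bullet> Y) / 2) *\<^sub>R b)"

definition riem_curv :: "('a::euclidean_space \<Rightarrow> 'a \<Rightarrow> 'a) \<Rightarrow> 'a \<Rightarrow> 'a \<Rightarrow> 'a \<Rightarrow> 'a" where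
  "riem_curv br X Y Z = lc_nabla br X (lc_nabla br Y Z) - lc_nabla br Y (lc_nabla br X Z)
                         - lc_nabla br (br X Y) Z"

definition rigging :: "(nat \<Rightarrow> 'a::real_vector set) \<Rightarrow> nat \<Rightarrow> 'a set" where
  "rigging gr l = span (\<Union>k\<in>{2..l}. gr k)"

definition hproj :: "(nat \<Rightarrow> 'a::real_vector set) \<Rightarrow> nat \<Rightarrow> 'a \<Rightarrow> 'a" where
  "hproj gr l x = (THE h. h \<in> gr 1 \<and> x - h \<in> rigging gr l)"

definition vproj :: "(nat \<Rightarrow> 'a::real_vector set) \<Rightarrow> nat \<Rightarrow> 'a \<Rightarrow> 'a" where
  "vproj gr l x = (THE v. v \<in> rigging gr l \<and> x - v \<in> gr 1)"

definition nabla_bar :: "('a::euclidean_space \<Rightarrow> 'a \<Rightarrow> 'a) \<Rightarrow> (nat \<Rightarrow> 'a set) \<Rightarrow> nat \<Rightarrow> 'a \<Rightarrow> 'a \<Rightarrow> 'a" where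
  "nabla_bar br gr l X Y =
     hproj gr l (lc_nabla br X (hproj gr l Y)) + vproj gr l (lc_nabla br X (vproj gr l Y))"

definition torsion_bar :: "('a::euclidean_space \<Rightarrow> 'a \<Rightarrow> 'a) \<Rightarrow> (nat \<Rightarrow> 'a set) \<Rightarrow> nat \<Rightarrow> 'a \<Rightarrow> 'a \<Rightarrow> 'a" where
  "torsion_bar br gr l X Y = nabla_bar br gr l X Y - nabla_bar br gr l Y X - br X Y"

definition curv_bar :: "('a::euclidean_space \<Rightarrow> 'a \<Rightarrow> 'a) \<Rightarrow> (nat \<Rightarrow> 'a set) \<Rightarrow> nat \<Rightarrow> 'a \<Rightarrow> 'a \<Rightarrow> 'a \<Rightarrow> 'a" where
  "curv_bar br gr l X Y Z = nabla_bar br gr l X (nabla_bar br gr l Y Z)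
      - nabla_bar br gr l Y (nabla_bar br gr l X Z) - nabla_bar br gr l (br X Y) Z"

definition solov_K :: "('a::euclidean_space \<Rightarrow> 'a \<Rightarrow> 'a) \<Rightarrow> (nat \<Rightarrow> 'a set) \<Rightarrow> nat \<Rightarrow> 'a \<Rightarrow> 'a \<Rightarrow> 'a \<Rightarrow> 'a \<Rightarrow> real" where
  "solov_K br gr l X Y Z W = curv_bar br gr l X Y Z \<bullet> W
      - (torsion_bar br gr l X Y \<bullet> torsion_bar br gr l Z W) / 2"

definition solov_sectional :: "('a::euclidean_space \<Rightarrow> 'a \<Rightarrow> 'a) \<Rightarrow> (nat \<Rightarrow> 'a set) \<Rightarrow> nat \<Rightarrow> 'a \<Rightarrow> 'a \<Rightarrow> real" where
  "solov_sectional br gr l u v = solov_K br gr l u v v u /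
      ((norm u)^2 * (norm v)^2 - (u \<bullet> v)^2)"

definition orthonormal_basis_of :: "'a::real_inner set \<Rightarrow> nat \<Rightarrow> (nat \<Rightarrow> 'a) \<Rightarrow> bool" where
  "orthonormal_basis_of S n e \<longleftrightarrow>
     (\<forall>i<n. e i \<in> S) \<and> (\<forall>i<n. \<forall>j<n. e i \<bullet> e j = (if i = j then 1 else 0)) \<and>
     span (e ` {..<n}) = S"

definition solov_ricci :: "('a::euclidean_space \<Rightarrow> 'a \<Rightarrow> 'a) \<Rightarrow> (nat \<Rightarrow> 'a set) \<Rightarrow> nat \<Rightarrow> nat \<Rightarrow> (nat \<Rightarrow> 'a) \<Rightarrow> 'a \<Rightarrow> 'a \<Rightarrow> real" where
  "solov_ricci br gr l n e X Y = (\<Sum>i<n. solov_K br gr l (e i) X Y (e i))"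

definition solov_scalar :: "('a::euclidean_space \<Rightarrow> 'a \<Rightarrow> 'a) \<Rightarrow> (nat \<Rightarrow> 'a set) \<Rightarrow> nat \<Rightarrow> nat \<Rightarrow> (nat \<Rightarrow> 'a) \<Rightarrow> real" where
  "solov_scalar br gr l n e = (\<Sum>j<n. solov_ricci br gr l n e (e j) (e j))"

end

theory Submission
  imports Defs
begin

lemma lin_sum_inner:
  fixes f :: "'a::euclidean_space \<Rightarrow> real"
  assumes "linear f"
  shows "(\<Sum>b\<in>Basis. f b *\<^sub>R b) \<bullet> W = f W"
proof -
  have "f W = f (\<Sum>b\<in>Basis. (W \<bullet> b) *\<^sub>R b)" by (simp add: euclidean_representation)
  also have "\<dots> = (\<Sum>b\<in>Basis. (W \<bullet> b) * f b)"
    using assms by (simp add: linear_sum linear_scale o_def)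
  moreover have "(\<Sum>b\<in>Basis. f b *\<^sub>R b) \<bullet> W = (\<Sum>b\<in>Basis. f b * (b \<bullet> W))"
    by (simp add: inner_sum_left)
  ultimately show ?thesis by (simp add: inner_commute mult.commute)
qed

lemma lc_inner:
  assumes "lie_algebra br"
  shows "lc_nabla br X Y \<bullet> W = (br X Y \<bullet> W - br Y W \<bullet> X + br W X \<bullet> Y) / 2"
proof -
  have l1: "linear (br Y)" using assms unfolding lie_algebra_def by auto
  have l2: "linear (\<lambda>b. br b X)" using assms unfolding lie_algebra_def by auto
  have "linear (\<lambda>b. (br X Y \<bullet> b - br Y b \<bullet> X + br b X \<bullet> Y) / 2)"
    unfolding linear_iff
    using linear_add[OF l1] linear_scale[OF l1] linear_add[OF l2] linear_scale[OF l2]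
    by (auto simp: inner_add algebra_simps diff_divide_distrib add_divide_distrib)
  then show ?thesis unfolding lc_nabla_def by (rule lin_sum_inner)
qed

lemma br_zero_right: "lie_algebra br \<Longrightarrow> br x 0 = 0"
  unfolding lie_algebra_def using linear_0 by blast
lemma br_zero_left: "lie_algebra br \<Longrightarrow> br 0 x = 0"
  unfolding lie_algebra_def using linear_0 by blast

lemma lc_zero: "lie_algebra br \<Longrightarrow> lc_nabla br X 0 = 0"
  unfolding lc_nabla_def by (simp add: br_zero_right br_zero_left)

context
  fixes br :: "'a::euclidean_space \<Rightarrow> 'a \<Rightarrow> 'a" and gr :: "nat \<Rightarrow> 'a set" and l :: nat
  assumes ca: "carnot_algebra br gr l"
    and orth: "\<forall>x\<in>gr 1. \<forall>y\<in>rigging gr l. x \<bullet> y = 0"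
begin

lemma la: "lie_algebra br" using ca unfolding carnot_algebra_def by auto
lemma l1: "l \<ge> 1" using ca unfolding carnot_algebra_def by auto
lemma ds: "direct_sum_decomp gr l" using ca unfolding carnot_algebra_def by auto
lemma sub1: "subspace (gr 1)" using ds l1 unfolding direct_sum_decomp_def by auto
lemma subr: "subspace (rigging gr l)" unfolding rigging_def by simp
lemma grad: "i\<in>{1..l} \<Longrightarrow> j\<in>{1..l} \<Longrightarrow> x\<in>gr i \<Longrightarrow> y\<in>gr j \<Longrightarrow>
        br x y \<in> (if i + j \<le> l then gr (i + j) else {0})"
  using ca unfolding carnot_algebra_def by blast
lemma gr_rig: "2 \<le> k \<Longrightarrow> k \<le> l \<Longrightarrow> x \<in> gr k \<Longrightarrow> x \<in> rigging gr l"
  unfolding rigging_def by (rule span_base) auto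

lemma inter0: "a \<in> gr 1 \<Longrightarrow> a \<in> rigging gr l \<Longrightarrow> a = 0"
  using orth by force

lemma decomp: "\<exists>h. h \<in> gr 1 \<and> x - h \<in> rigging gr l"
proof -
  obtain c where c: "\<forall>k\<in>{1..l}. c k \<in> gr k" "x = (\<Sum>k=1..l. c k)"
    using ds unfolding direct_sum_decomp_def by blast
  have "{1..l} = insert 1 {2..l}" using l1 by auto
  then have "x = c 1 + (\<Sum>k=2..l. c k)" using c(2) by simp
  moreover have "(\<Sum>k=2..l. c k) \<in> rigging gr l"
    unfolding rigging_def
  proof (rule span_sum)
    fix k assume "k \<in> {2..l}"
    then have "c k \<in> (\<Union>k\<in>{2..l}. gr k)" using c(1) by force
    then show "c k \<in> span (\<Union>k\<in>{2..l}. gr k)" by (rule span_base)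
  qed
  moreover have "c 1 \<in> gr 1" using c(1) l1 by auto
  ultimately show ?thesis by (metis add_diff_cancel_left')
qed

lemma hproj_spec: "hproj gr l x \<in> gr 1 \<and> x - hproj gr l x \<in> rigging gr l"
proof -
  have "\<exists>!h. h \<in> gr 1 \<and> x - h \<in> rigging gr l"
  proof (rule ex_ex1I)
    show "\<exists>h. h \<in> gr 1 \<and> x - h \<in> rigging gr l" by (rule decomp)
  next
    fix h h' assume a: "h \<in> gr 1 \<and> x - h \<in> rigging gr l" "h' \<in> gr 1 \<and> x - h' \<in> rigging gr l"
    have "h - h' \<in> gr 1" using a sub1 by (simp add: subspace_diff)
    moreover have "(x - h') - (x - h) \<in> rigging gr l" using a subspace_diff[OF subr] by blast
    moreover have "(x - h') - (x - h) = h - h'" by simp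
    ultimately have "h - h' = 0" using inter0 by metis
    then show "h = h'" by simp
  qed
  then show ?thesis unfolding hproj_def by (rule theI')
qed

lemma vproj_eq: assumes "v \<in> rigging gr l" "x - v \<in> gr 1" shows "vproj gr l x = v"
  unfolding vproj_def
proof (rule the_equality)
  show "v \<in> rigging gr l \<and> x - v \<in> gr 1" using assms by simp
next
  fix v' assume a: "v' \<in> rigging gr l \<and> x - v' \<in> gr 1"
  have "(x - v) - (x - v') \<in> gr 1" using a assms subspace_diff[OF sub1] by blast
  moreover have "v' - v \<in> rigging gr l" using a assms subr by (simp add: subspace_diff)
  moreover have "(x - v) - (x - v') = v' - v" by simp
  ultimately have "v' - v = 0" using inter0 by metis
  then show "v' = v" by simp
qed

lemma hproj_eq: assumes "h \<in> gr 1" "x - h \<in> rigging gr l" shows "hproj gr l x = h"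
proof -
  have "hproj gr l x - h \<in> gr 1" using assms hproj_spec sub1 by (simp add: subspace_diff)
  moreover have "(x - h) - (x - hproj gr l x) \<in> rigging gr l"
    using assms hproj_spec subspace_diff[OF subr] by blast
  moreover have "(x - h) - (x - hproj gr l x) = hproj gr l x - h" by simp
  ultimately have "hproj gr l x - h = 0" using inter0 by metis
  then show ?thesis by simp
qed

lemma hproj_perp: assumes "\<forall>w\<in>gr 1. x \<bullet> w = 0" shows "hproj gr l x = 0"
proof -
  let ?h = "hproj gr l x"
  have "(x - ?h) \<bullet> ?h = 0" using hproj_spec orth by (simp add: inner_commute)
  then have "?h \<bullet> ?h = 0" using assms hproj_spec by (simp add: inner_diff_left)
  then show ?thesis by simp
qed

lemma hproj_inner: "w \<in> gr 1 \<Longrightarrow> hproj gr l x \<bullet> w = x \<bullet> w"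
proof -
  assume w: "w \<in> gr 1"
  have "(x - hproj gr l x) \<bullet> w = 0" using hproj_spec orth w by (simp add: inner_commute)
  then show ?thesis by (simp add: inner_diff_left)
qed

lemma br11_g: assumes "X \<in> gr 1" "Y \<in> gr 1" shows "br X Y \<in> (if 2 \<le> l then gr 2 else {0})"
proof -
  have "br X Y \<in> (if 1 + 1 \<le> l then gr (1 + 1) else {0})" using grad[OF _ _ assms] l1 by auto
  then show ?thesis unfolding one_add_one .
qed

lemma br11: assumes "X \<in> gr 1" "Y \<in> gr 1" shows "br X Y \<in> rigging gr l"
proof (cases "2 \<le> l")
  case True then show ?thesis using br11_g[OF assms] gr_rig[of 2] by simp
next
  case False then show ?thesis using br11_g[OF assms] subr by (simp add: subspace_0)
qed

lemma br_deg3: assumes "X \<in> gr 1" "Y \<in> gr 1" "Z \<in> gr 1"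
  shows "br (br X Y) Z \<in> rigging gr l" "br Z (br X Y) \<in> rigging gr l"
proof -
  have b: "br X Y \<in> (if 2 \<le> l then gr 2 else {0})" using br11_g[OF assms(1,2)] .
  have e1: "(2::nat) + 1 = 3" and e2: "(1::nat) + 2 = 3" by simp_all
  show "br (br X Y) Z \<in> rigging gr l"
  proof (cases "2 \<le> l")
    case True
    then have "br (br X Y) Z \<in> (if 2 + 1 \<le> l then gr (2 + 1) else {0})"
      using b grad[of 2 1 "br X Y" Z] assms l1 by auto
    then have "br (br X Y) Z \<in> (if 3 \<le> l then gr 3 else {0})" unfolding e1 .
    then show ?thesis using gr_rig[of 3] subr by (auto split: if_splits simp: subspace_0)
  next
    case False then show ?thesis using b br_zero_left[OF la] subr by (auto simp: subspace_0)
  qed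
  show "br Z (br X Y) \<in> rigging gr l"
  proof (cases "2 \<le> l")
    case True
    then have "br Z (br X Y) \<in> (if 1 + 2 \<le> l then gr (1 + 2) else {0})"
      using b grad[of 1 2 Z "br X Y"] assms l1 by auto
    then have "br Z (br X Y) \<in> (if 3 \<le> l then gr 3 else {0})" unfolding e2 .
    then show ?thesis using gr_rig[of 3] subr by (auto split: if_splits simp: subspace_0)
  next
    case False then show ?thesis using b br_zero_right[OF la] subr by (auto simp: subspace_0)
  qed
qed

lemma perp1: "a \<in> rigging gr l \<Longrightarrow> w \<in> gr 1 \<Longrightarrow> a \<bullet> w = 0"
  using orth inner_commute by metis

lemma nb11: assumes "X \<in> gr 1" "Y \<in> gr 1" shows "nabla_bar br gr l X Y = 0"
proof -
  have hy: "hproj gr l Y = Y" using hproj_eq[of Y Y] assms subr by (simp add: subspace_0)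
  have vy: "vproj gr l Y = 0" using vproj_eq[of 0 Y] assms subr by (simp add: subspace_0)
  have v0: "vproj gr l 0 = 0" using vproj_eq[of 0 0] sub1 subr by (simp add: subspace_0)
  have "\<forall>w\<in>gr 1. lc_nabla br X Y \<bullet> w = 0"
  proof
    fix w assume w: "w \<in> gr 1"
    have "br X Y \<bullet> w = 0" "br Y w \<bullet> X = 0" "br w X \<bullet> Y = 0"
      using perp1 br11 assms w by blast+
    then show "lc_nabla br X Y \<bullet> w = 0" by (simp add: lc_inner[OF la])
  qed
  then show ?thesis unfolding nabla_bar_def using hy vy v0 hproj_perp lc_zero[OF la] by simp
qed

lemma vproj0: "vproj gr l 0 = 0" using vproj_eq[of 0 0] sub1 subr by (simp add: subspace_0)

lemma nb0: "nabla_bar br gr l X 0 = 0"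
proof -
  have h0: "hproj gr l 0 = 0" using hproj_eq[of 0 0] sub1 subr by (simp add: subspace_0)
  have v0: "vproj gr l 0 = 0" using vproj_eq[of 0 0] sub1 subr by (simp add: subspace_0)
  show ?thesis unfolding nabla_bar_def using h0 v0 lc_zero[OF la] by simp
qed

lemma K0: assumes "X \<in> gr 1" "Y \<in> gr 1" "Z \<in> gr 1" "W \<in> gr 1"
  shows "solov_K br gr l X Y Z W = 0"
proof -
  have hz: "hproj gr l Z = Z" using hproj_eq[of Z Z] assms subr by (simp add: subspace_0)
  have vz: "vproj gr l Z = 0" using vproj_eq[of 0 Z] assms subr by (simp add: subspace_0)
  have c: "curv_bar br gr l X Y Z = - hproj gr l (lc_nabla br (br X Y) Z)"
  proof -
    have "nabla_bar br gr l Y Z = 0" "nabla_bar br gr l X Z = 0" using nb11 assms by auto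
    moreover have "nabla_bar br gr l (br X Y) Z = hproj gr l (lc_nabla br (br X Y) Z)"
      unfolding nabla_bar_def using vz hz vproj0 lc_zero[OF la] by simp
    ultimately show ?thesis unfolding curv_bar_def by (simp add: nb0)
  qed
  have "curv_bar br gr l X Y Z \<bullet> W = - (lc_nabla br (br X Y) Z \<bullet> W)"
    unfolding c using hproj_inner assms by simp
  also have "\<dots> = (br Z W \<bullet> br X Y) / 2"
    using br_deg3[OF assms(1,2,3)] br_deg3[OF assms(1,2,4)] perp1 assms
    by (simp add: lc_inner[OF la])
  finally have 1: "curv_bar br gr l X Y Z \<bullet> W = (br Z W \<bullet> br X Y) / 2" .
  have t1: "torsion_bar br gr l X Y = - br X Y" unfolding torsion_bar_def using nb11 assms by simp
  have t2: "torsion_bar br gr l Z W = - br Z W" unfolding torsion_bar_def using nb11 assms by simp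
  show ?thesis unfolding solov_K_def 1 t1 t2 by (simp add: inner_commute)
qed

end

theorem corollary2:
  fixes br :: "'a::euclidean_space \<Rightarrow> 'a \<Rightarrow> 'a" and gr :: "nat \<Rightarrow> 'a set" and l :: nat
  assumes "carnot_algebra br gr l"
  shows "(commutative_alg br \<longrightarrow> (\<forall>X Y Z. riem_curv br X Y Z = 0))
       \<and> (\<not> commutative_alg br \<and> (\<forall>x\<in>gr 1. \<forall>y\<in>rigging gr l. x \<bullet> y = 0) \<longrightarrow>
            l \<ge> 2 \<and>
            (\<forall>u\<in>gr 1. \<forall>v\<in>gr 1. \<not> dependent {u, v} \<and> u \<noteq> v \<longrightarrow> solov_sectional br gr l u v = 0) \<and>
            (\<forall>n e. orthonormal_basis_of (gr 1) n e \<longrightarrow>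
               (\<forall>X\<in>gr 1. \<forall>Y\<in>gr 1. solov_ricci br gr l n e X Y = 0) \<and>
               solov_scalar br gr l n e = 0))"
proof (intro conjI impI)
  assume "commutative_alg br"
  then have z: "\<And>x y. br x y = 0" unfolding commutative_alg_def by auto
  show "\<forall>X Y Z. riem_curv br X Y Z = 0"
    unfolding riem_curv_def lc_nabla_def by (simp add: z)
next
  assume "\<not> commutative_alg br \<and> (\<forall>x\<in>gr 1. \<forall>y\<in>rigging gr l. x \<bullet> y = 0)"
  then have nc: "\<not> commutative_alg br" and orth: "\<forall>x\<in>gr 1. \<forall>y\<in>rigging gr l. x \<bullet> y = 0" by auto
  note K = K0[OF assms orth]
  show "l \<ge> 2"
  proof (rule ccontr)
    assume "\<not> l \<ge> 2"
    then have l: "l = 1" using l1[OF assms orth] by simp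
    have all: "x \<in> gr 1" for x
    proof -
      obtain c where c: "\<forall>k\<in>{1..l}. c k \<in> gr k" "x = (\<Sum>k=1..l. c k)"
        using ds[OF assms orth] unfolding direct_sum_decomp_def by blast
      then show ?thesis using l by simp
    qed
    have "br x y = 0" for x y using grad[OF assms orth, of 1 1 x y] all l by simp
    then show False using nc unfolding commutative_alg_def by auto
  qed
  show "\<forall>u\<in>gr 1. \<forall>v\<in>gr 1. \<not> dependent {u, v} \<and> u \<noteq> v \<longrightarrow> solov_sectional br gr l u v = 0"
    unfolding solov_sectional_def using K by simp
  show "\<forall>n e. orthonormal_basis_of (gr 1) n e \<longrightarrow>
               (\<forall>X\<in>gr 1. \<forall>Y\<in>gr 1. solov_ricci br gr l n e X Y = 0) \<and>
               solov_scalar br gr l n e = 0"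
    unfolding orthonormal_basis_of_def solov_scalar_def solov_ricci_def using K by simp
qed

end
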